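(* Let $\alpha\neq0$ and $b<0$, consider the system $\dot x=u\alpha x$, $\dot y=by+ux$ on $G$, and let $\mathcal C=\bigcup_{u\in B}r_u$. Then: 1. If $b\notin\alpha\Omega=\{\alpha u:u\in\Omega\}$, then $\mathcal C=\{(x,y)\in G: m_{u_*}x\le y\le m_{u^*}x\}$. 2. If $b\in\alpha\Omega$, then $\mathcal C=\{(x,y)\in G: y\le m_{u^*}x\}$ when $\alpha>0$, and $\mathcal C=\{(x,y)\in G: y\ge m_{u_*}x\}$ when $\alpha<0$. 3. For any $u_1,u_2$ in the interior (in $\mathbb{R}$) of $B$ with $u_1\neq u_2$, there exist $t_0>0$ and $u\in\Omega$ such that $\varphi(t_0,r_{u_1},u)=r_{u_2}$. 4. $\mathcal C$ is positively invariant: $\varphi(t,p,u)\in\mathcal C$ for all $p\in\mathcal C$, $t\ge0$ and $u\in\mathcal U$.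
   Context: Let $G=\{(x,y)\in\mathbb{R}^2:x>0\}$. Fix $\Omega=[u_*,u^*]$ with $u_*<0<u^*$, and fix constants $\alpha\neq0$, $b<0$. The admissible controls $\mathcal U$ are the piecewise constant functions $\mathbb{R}\to\Omega$. Consider the system $\dot x=u\alpha x$, $\dot y=by+ux$ on $G$, with solutions $\varphi(t,p,u)$. For $u\in\mathbb{R}$ with $u\alpha\neq b$, set $m_u=\frac{u}{u\alpha-b}$ and define the ray $r_u=\{(x,y)\in G: y=m_ux\}$. Let $B=\{u\in\Omega: u\alpha-b>0\}$; this set is nonempty since $0\in B$. *)

theory Defs
  imports "HOL-Analysis.Analysis"
begin

definition G :: "(real \<times> real) set" where
  "G = {p. fst p > 0}"

definition Omega :: "real \<Rightarrow> real \<Rightarrow> real set" where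
  "Omega umin umax = {umin..umax}"

text \<open>Admissible controls: piecewise constant functions R -> Omega, i.e. on every
  bounded interval there are finitely many exceptional points, away from which the
  control is locally constant.\<close>
definition admissible :: "real \<Rightarrow> real \<Rightarrow> (real \<Rightarrow> real) \<Rightarrow> bool" where
  "admissible umin umax u \<longleftrightarrow>
     (\<forall>t. u t \<in> Omega umin umax) \<and>
     (\<forall>a c. \<exists>S. finite S \<and>
        (\<forall>t \<in> {a<..<c} - S. \<exists>e>0. \<forall>s. \<bar>s - t\<bar> < e \<longrightarrow> u s = u t))"

definition fld :: "real \<Rightarrow> real \<Rightarrow> real \<Rightarrow> real \<times> real \<Rightarrow> real \<times> real" where
  "fld \<alpha> b u p = (u * \<alpha> * fst p, b * snd p + u * fst p)"

text \<open>gamma is a (Caratheodory) solution through p at time 0 under control u,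
  in integral form.\<close>
definition is_traj :: "real \<Rightarrow> real \<Rightarrow> (real \<Rightarrow> real) \<Rightarrow> real \<times> real \<Rightarrow> (real \<Rightarrow> real \<times> real) \<Rightarrow> bool" where
  "is_traj \<alpha> b u p \<gamma> \<longleftrightarrow>
     \<gamma> 0 = p \<and>
     (\<forall>t\<ge>0. ((\<lambda>s. fld \<alpha> b (u s) (\<gamma> s)) has_integral (\<gamma> t - p)) {0..t}) \<and>
     (\<forall>t\<le>0. ((\<lambda>s. fld \<alpha> b (u s) (\<gamma> s)) has_integral (p - \<gamma> t)) {t..0})"

definition phi :: "real \<Rightarrow> real \<Rightarrow> real \<Rightarrow> real \<times> real \<Rightarrow> (real \<Rightarrow> real) \<Rightarrow> real \<times> real" where
  "phi \<alpha> b t p u = (THE \<gamma>. is_traj \<alpha> b u p \<gamma>) t"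

definition slope :: "real \<Rightarrow> real \<Rightarrow> real \<Rightarrow> real" where
  "slope \<alpha> b u = u / (u * \<alpha> - b)"

definition ray :: "real \<Rightarrow> real \<Rightarrow> real \<Rightarrow> (real \<times> real) set" where
  "ray \<alpha> b u = {p \<in> G. snd p = slope \<alpha> b u * fst p}"

definition Bset :: "real \<Rightarrow> real \<Rightarrow> real \<Rightarrow> real \<Rightarrow> real set" where
  "Bset \<alpha> b umin umax = {u \<in> Omega umin umax. u * \<alpha> - b > 0}"

definition Cset :: "real \<Rightarrow> real \<Rightarrow> real \<Rightarrow> real \<Rightarrow> (real \<times> real) set" where
  "Cset \<alpha> b umin umax = (\<Union>u \<in> Bset \<alpha> b umin umax. ray \<alpha> b u)"

end

theory Submission
  imports Defs
begin

definition pc :: "(real \<Rightarrow> real) \<Rightarrow> bool" where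
  "pc u \<longleftrightarrow> (\<exists>M. \<forall>t. \<bar>u t\<bar> \<le> M) \<and>
     (\<forall>a c. \<exists>S. finite S \<and> (\<forall>t \<in> {a<..<c} - S. \<exists>e>0. \<forall>s. \<bar>s - t\<bar> < e \<longrightarrow> u s = u t))"

lemma pc_isCont:
  assumes "pc u"
  obtains S where "finite S" "\<And>t. t \<in> {a<..<c} - S \<Longrightarrow> isCont u t"
proof -
  from assms have "\<exists>S. finite S \<and> (\<forall>t \<in> {a<..<c} - S. \<exists>e>0. \<forall>s. \<bar>s - t\<bar> < e \<longrightarrow> u s = u t)"
    unfolding pc_def by simp
  then obtain S where S: "finite S" "\<forall>t \<in> {a<..<c} - S. \<exists>e>0. \<forall>s. \<bar>s - t\<bar> < e \<longrightarrow> u s = u t"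
    by (elim exE conjE)
  have "isCont u t" if t: "t \<in> {a<..<c} - S" for t
  proof -
    have "\<exists>e>0. \<forall>s. \<bar>s - t\<bar> < e \<longrightarrow> u s = u t" using S(2) t by (rule bspec)
    then obtain e where e: "e > 0" "\<And>s. \<bar>s - t\<bar> < e \<Longrightarrow> u s = u t" by auto
    have ev: "eventually (\<lambda>s. u t = u s) (at t)"
      unfolding eventually_at using e by (metis dist_real_def)
    have "(u \<longlongrightarrow> u t) (at t)"
      by (rule Lim_transform_eventually[OF tendsto_const ev])
    then show ?thesis by (simp add: isCont_def)
  qed
  then show ?thesis using S(1) that by simp
qed


lemma pc_bound: assumes "pc u" obtains M where "\<And>t. \<bar>u t\<bar> \<le> M"
  using assms unfolding pc_def by blast

lemma int_pw:
  fixes g :: "real \<Rightarrow> real"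
  assumes S: "finite S" and c: "continuous_on ({a..b} - S) g" and M: "\<And>x. x \<in> {a..b} \<Longrightarrow> \<bar>g x\<bar> \<le> M"
  shows "g integrable_on {a..b}"
proof -
  have Sl: "S \<in> sets lebesgue" using negligible_imp_sets[OF negligible_finite[OF S]] .
  have L: "{a..b} - S \<in> lmeasurable"
    using fmeasurable_Diff[OF _ Sl] by (metis lmeasurable_cbox cbox_interval)
  have m: "g \<in> borel_measurable (lebesgue_on ({a..b} - S))"
    using continuous_imp_measurable_on_sets_lebesgue[OF c] L by blast
  have i: "(\<lambda>_. M) integrable_on ({a..b} - S)" using L by (rule integrable_on_const)
  have "g absolutely_integrable_on ({a..b} - S)"
    apply (rule measurable_bounded_by_integrable_imp_absolutely_integrable[OF m _ i])
    using L M by auto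
  then have "g integrable_on ({a..b} - S)" using set_lebesgue_integral_eq_integral(1) by blast
  then show ?thesis
    by (rule integrable_spike_set) (auto intro: negligible_subset[OF negligible_finite[OF S]])
qed

lemma pc_reflect: assumes "pc u" shows "pc (\<lambda>s. - u (- s))"
proof -
  obtain M where M: "\<And>t. \<bar>u t\<bar> \<le> M" using pc_bound[OF assms] by blast
  have "\<exists>S. finite S \<and> (\<forall>t \<in> {a<..<c} - S. \<exists>e>0. \<forall>s. \<bar>s - t\<bar> < e \<longrightarrow> - u (- s) = - u (- t))" for a c
  proof -
    from assms have "\<exists>S. finite S \<and> (\<forall>t \<in> {-c<..<-a} - S. \<exists>e>0. \<forall>s. \<bar>s - t\<bar> < e \<longrightarrow> u s = u t)"
      unfolding pc_def by simp
    then obtain S where S: "finite S" "\<forall>t \<in> {-c<..<-a} - S. \<exists>e>0. \<forall>s. \<bar>s - t\<bar> < e \<longrightarrow> u s = u t"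
      by (elim exE conjE)
    have "\<exists>e>0. \<forall>s. \<bar>s - t\<bar> < e \<longrightarrow> - u (- s) = - u (- t)" if t: "t \<in> {a<..<c} - uminus ` S" for t
    proof -
      have "- t \<in> {-c<..<-a} - S" using t by (auto simp: image_iff)
      then have "\<exists>e>0. \<forall>s. \<bar>s - (-t)\<bar> < e \<longrightarrow> u s = u (-t)" using S(2) by (rule bspec[rotated])
      then obtain e where e: "e > 0" "\<forall>s. \<bar>s - (-t)\<bar> < e \<longrightarrow> u s = u (-t)" by (elim exE conjE)
      have "\<forall>s. \<bar>s - t\<bar> < e \<longrightarrow> - u (- s) = - u (- t)"
      proof (intro allI impI)
        fix s assume "\<bar>s - t\<bar> < e"
        then have "\<bar>(-s) - (-t)\<bar> < e" by linarith
        then show "- u (- s) = - u (- t)" using e(2) by metis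
      qed
      then show ?thesis using e(1) by blast
    qed
    then show ?thesis using S(1) by (intro exI[of _ "uminus ` S"]) auto
  qed
  moreover have "\<forall>t. \<bar>- u (- t)\<bar> \<le> M" using M by simp
  ultimately show ?thesis unfolding pc_def by blast
qed

lemma int_deriv:
  fixes g :: "real \<Rightarrow> 'a::banach"
  assumes "g integrable_on {0..T}" "finite S" "t \<in> {0<..<T} - S" "continuous (at t within {0..T}) g"
  shows "((\<lambda>s. integral {0..s} g) has_vector_derivative g t) (at t)"
proof -
  have c: "continuous (at t within ({0..T} - S)) g"
    using assms(4) continuous_within_subset by blast
  have "((\<lambda>s. integral {0..s} g) has_vector_derivative g t) (at t within ({0..T} - S))"
    using integral_has_vector_derivative_continuous_at[OF assms(1) _ assms(2) c] assms(3) by auto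
  then have d: "((\<lambda>s. integral {0..s} g) has_vector_derivative g t) (at t within ({0<..<T} - S))"
    by (rule has_vector_derivative_within_subset) auto
  have o: "open ({0<..<T} - S)" using assms(2) by (simp add: finite_imp_closed open_Diff)
  show ?thesis using d at_within_open[OF assms(3) o] by simp
qed


lemma vd_fst: "(\<gamma> has_vector_derivative v) F \<Longrightarrow> ((\<lambda>s. fst (\<gamma> s)) has_real_derivative fst v) F"
  unfolding has_real_derivative_iff_has_vector_derivative has_vector_derivative_def
  by (drule has_derivative_fst) simp

lemma vd_snd: "(\<gamma> has_vector_derivative v) F \<Longrightarrow> ((\<lambda>s. snd (\<gamma> s)) has_real_derivative snd v) F"
  unfolding has_real_derivative_iff_has_vector_derivative has_vector_derivative_def
  by (drule has_derivative_snd) simp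

definition UU :: "(real \<Rightarrow> real) \<Rightarrow> real \<Rightarrow> real" where
  "UU u t = integral {0..t} u"
definition XX :: "real \<Rightarrow> (real \<Rightarrow> real) \<Rightarrow> real \<Rightarrow> real \<Rightarrow> real" where
  "XX \<alpha> u x0 t = x0 * exp (\<alpha> * UU u t)"
definition VV :: "real \<Rightarrow> real \<Rightarrow> (real \<Rightarrow> real) \<Rightarrow> real \<Rightarrow> real \<Rightarrow> real" where
  "VV \<alpha> b u x0 t = integral {0..t} (\<lambda>s. exp (- b * s) * u s * XX \<alpha> u x0 s)"
definition YY :: "real \<Rightarrow> real \<Rightarrow> (real \<Rightarrow> real) \<Rightarrow> real \<Rightarrow> real \<Rightarrow> real \<Rightarrow> real" where
  "YY \<alpha> b u x0 y0 t = exp (b * t) * (y0 + VV \<alpha> b u x0 t)"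
definition Gam :: "real \<Rightarrow> real \<Rightarrow> (real \<Rightarrow> real) \<Rightarrow> real \<times> real \<Rightarrow> real \<Rightarrow> real \<times> real" where
  "Gam \<alpha> b u p t = (XX \<alpha> u (fst p) t, YY \<alpha> b u (fst p) (snd p) t)"

lemma constr:
  assumes "pc u" "T > 0"
  obtains S where "finite S" "continuous_on {0..T} (UU u)" "continuous_on {0..T} (VV \<alpha> b u xz)"
    "\<And>t. t \<in> {0<..<T} - S \<Longrightarrow> (UU u has_real_derivative u t) (at t)"
    "\<And>t. t \<in> {0<..<T} - S \<Longrightarrow> (VV \<alpha> b u xz has_real_derivative (exp (- b * t) * u t * XX \<alpha> u xz t)) (at t)"
proof -
  obtain S where S: "finite S" "\<And>t. t \<in> {-1<..<T+1} - S \<Longrightarrow> isCont u t"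
    using pc_isCont[OF assms(1)] by blast
  obtain M where M: "\<And>t. \<bar>u t\<bar> \<le> M" using pc_bound[OF assms(1)] by blast
  have ic: "isCont u t" if "t \<in> {0..T} - S" for t using S(2) that by auto
  have cu: "continuous_on ({0..T} - S) u"
    by (rule continuous_at_imp_continuous_on) (use ic in blast)
  have iu: "u integrable_on {0..T}" using int_pw[OF S(1) cu, of M] M by blast
  have cU: "continuous_on {0..T} (UU u)"
    unfolding UU_def by (rule indefinite_integral_continuous_1[OF iu])
  have cX: "continuous_on {0..T} (XX \<alpha> u xz)"
    unfolding XX_def by (intro continuous_intros cU)
  define h where "h = (\<lambda>s. exp (- b * s) * u s * XX \<alpha> u xz s)"
  have ch: "continuous_on ({0..T} - S) h"
    unfolding h_def by (intro continuous_intros cu continuous_on_subset[OF cX]) auto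
  have "compact (XX \<alpha> u xz ` {0..T})" by (rule compact_continuous_image[OF cX]) simp
  then obtain B where B: "B > 0" "\<And>x. x \<in> XX \<alpha> u xz ` {0..T} \<Longrightarrow> norm x \<le> B"
    using compact_imp_bounded bounded_pos by metis
  have M0: "0 \<le> M" using M[of 0] by linarith
  have hb: "\<bar>h s\<bar> \<le> exp (\<bar>b\<bar> * T) * M * B" if s: "s \<in> {0..T}" for s
  proof -
    have e: "exp (- b * s) \<le> exp (\<bar>b\<bar> * T)"
    proof -
      have "- b * s \<le> \<bar>b\<bar> * T"
      proof -
        have "- b * s \<le> \<bar>b\<bar> * s" using s by (intro mult_right_mono) auto
        also have "\<dots> \<le> \<bar>b\<bar> * T" using s by (intro mult_left_mono) auto
        finally show ?thesis .
      qed
      then show ?thesis by simp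
    qed
    have x: "\<bar>XX \<alpha> u xz s\<bar> \<le> B" using B(2)[of "XX \<alpha> u xz s"] s by auto
    have "\<bar>h s\<bar> = exp (- b * s) * \<bar>u s\<bar> * \<bar>XX \<alpha> u xz s\<bar>" unfolding h_def by (simp add: abs_mult)
    also have "\<dots> \<le> exp (\<bar>b\<bar> * T) * M * B"
      by (intro mult_mono e M x) (auto simp: M0)
    finally show ?thesis .
  qed
  have ih: "h integrable_on {0..T}" by (rule int_pw[OF S(1) ch hb])
  have cV: "continuous_on {0..T} (VV \<alpha> b u xz)"
    unfolding VV_def h_def[symmetric] by (rule indefinite_integral_continuous_1[OF ih])
  have dU: "(UU u has_real_derivative u t) (at t)" if t: "t \<in> {0<..<T} - S" for t
  proof -
    have "continuous (at t within {0..T}) u" using ic[of t] t continuous_at_imp_continuous_at_within by auto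
    then show ?thesis
      unfolding UU_def has_real_derivative_iff_has_vector_derivative
      using int_deriv[OF iu S(1) t] by blast
  qed
  have dV: "(VV \<alpha> b u xz has_real_derivative h t) (at t)" if t: "t \<in> {0<..<T} - S" for t
  proof -
    have c1: "continuous (at t within {0..T}) u" using ic[of t] t continuous_at_imp_continuous_at_within by auto
    have c2: "continuous (at t within {0..T}) (XX \<alpha> u xz)"
      using cX t unfolding continuous_on_eq_continuous_within by auto
    have "continuous (at t within {0..T}) h"
      unfolding h_def by (intro continuous_intros c1 c2)
    then show ?thesis
      unfolding VV_def h_def[symmetric] has_real_derivative_iff_has_vector_derivative
      using int_deriv[OF ih S(1) t] by blast
  qed
  show ?thesis using that[OF S(1) cU cV dU] dV unfolding h_def by blast
qed


definition fwd :: "real \<Rightarrow> real \<Rightarrow> (real \<Rightarrow> real) \<Rightarrow> real \<times> real \<Rightarrow> (real \<Rightarrow> real \<times> real) \<Rightarrow> bool" where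
  "fwd \<alpha> b u p \<gamma> \<longleftrightarrow> \<gamma> 0 = p \<and> (\<forall>t\<ge>0. ((\<lambda>s. fld \<alpha> b (u s) (\<gamma> s)) has_integral (\<gamma> t - p)) {0..t})"

lemma fwd_I:
  assumes "\<gamma> 0 = p"
    and "\<And>T. T > 0 \<Longrightarrow> \<exists>S. finite S \<and> continuous_on {0..T} \<gamma> \<and>
           (\<forall>s\<in>{0<..<T} - S. (\<gamma> has_vector_derivative fld \<alpha> b (u s) (\<gamma> s)) (at s))"
  shows "fwd \<alpha> b u p \<gamma>"
  unfolding fwd_def
proof (intro conjI allI impI assms(1))
  fix t :: real assume t: "t \<ge> 0"
  show "((\<lambda>s. fld \<alpha> b (u s) (\<gamma> s)) has_integral \<gamma> t - p) {0..t}"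
  proof (cases "t = 0")
    case True then show ?thesis using assms(1) has_integral_refl(2)[of _ 0] by simp
  next
    case False
    then have "t > 0" using t by simp
    from assms(2)[OF this] obtain S where S: "finite S" "continuous_on {0..t} \<gamma>"
      "\<forall>s\<in>{0<..<t} - S. (\<gamma> has_vector_derivative fld \<alpha> b (u s) (\<gamma> s)) (at s)" by blast
    have "((\<lambda>s. fld \<alpha> b (u s) (\<gamma> s)) has_integral \<gamma> t - \<gamma> 0) {0..t}"
      by (rule fundamental_theorem_of_calculus_interior_strong[OF S(1) t _ S(2)]) (use S(3) in blast)
    then show ?thesis using assms(1) by simp
  qed
qed

lemma Gam_0: "Gam \<alpha> b u p 0 = p"
  by (simp add: Gam_def XX_def YY_def UU_def VV_def)

lemma Gam_deriv:
  assumes "pc u" "T > 0"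
  obtains S where "finite S" "continuous_on {0..T} (Gam \<alpha> b u p)"
    "\<And>t. t \<in> {0<..<T} - S \<Longrightarrow> (Gam \<alpha> b u p has_vector_derivative fld \<alpha> b (u t) (Gam \<alpha> b u p t)) (at t)"
proof -
  obtain S where S: "finite S" "continuous_on {0..T} (UU u)" "continuous_on {0..T} (VV \<alpha> b u (fst p))"
    "\<And>t. t \<in> {0<..<T} - S \<Longrightarrow> (UU u has_real_derivative u t) (at t)"
    "\<And>t. t \<in> {0<..<T} - S \<Longrightarrow> (VV \<alpha> b u (fst p) has_real_derivative (exp (- b * t) * u t * XX \<alpha> u (fst p) t)) (at t)"
    using constr[OF assms] by blast
  have c: "continuous_on {0..T} (Gam \<alpha> b u p)"
    unfolding Gam_def XX_def YY_def by (intro continuous_intros S(2) S(3))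
  have d: "(Gam \<alpha> b u p has_vector_derivative fld \<alpha> b (u t) (Gam \<alpha> b u p t)) (at t)"
    if t: "t \<in> {0<..<T} - S" for t
  proof -
    have dX: "(XX \<alpha> u (fst p) has_real_derivative u t * \<alpha> * XX \<alpha> u (fst p) t) (at t)"
      unfolding XX_def
      by (rule derivative_eq_intros S(4)[OF t] refl | simp)+
    have dY: "(YY \<alpha> b u (fst p) (snd p) has_real_derivative
        b * YY \<alpha> b u (fst p) (snd p) t + u t * XX \<alpha> u (fst p) t) (at t)"
    proof -
      have "(YY \<alpha> b u (fst p) (snd p) has_real_derivative
        exp (b * t) * b * (snd p + VV \<alpha> b u (fst p) t) + exp (b * t) * (exp (- b * t) * u t * XX \<alpha> u (fst p) t)) (at t)"
        unfolding YY_def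
        by (rule derivative_eq_intros S(5)[OF t] refl | simp)+
      moreover have "exp (b * t) * b * (snd p + VV \<alpha> b u (fst p) t) + exp (b * t) * (exp (- b * t) * u t * XX \<alpha> u (fst p) t)
          = b * YY \<alpha> b u (fst p) (snd p) t + u t * XX \<alpha> u (fst p) t"
      proof -
        have ee: "exp (b * t) * exp (- b * t) = 1" by (simp add: mult_exp_exp)
        have "exp (b * t) * (exp (- b * t) * u t * XX \<alpha> u (fst p) t) = (exp (b * t) * exp (- b * t)) * (u t * XX \<alpha> u (fst p) t)"
          by (simp only: mult.assoc)
        also have "\<dots> = u t * XX \<alpha> u (fst p) t" by (simp only: ee mult_1_left)
        finally show ?thesis by (simp add: YY_def)
      qed
      ultimately show ?thesis by simp
    qed
    show ?thesis
      unfolding Gam_def fld_def fst_conv snd_conv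
      using has_vector_derivative_Pair[OF dX[unfolded has_real_derivative_iff_has_vector_derivative]
          dY[unfolded has_real_derivative_iff_has_vector_derivative]] by simp
  qed
  show ?thesis using that[OF S(1) c d] by blast
qed

lemma Gam_fwd: assumes "pc u" shows "fwd \<alpha> b u p (Gam \<alpha> b u p)"
proof (rule fwd_I)
  show "Gam \<alpha> b u p 0 = p" by (rule Gam_0)
  fix T :: real assume T: "T > 0"
  obtain S where S: "finite S" "continuous_on {0..T} (Gam \<alpha> b u p)"
    "\<And>t. t \<in> {0<..<T} - S \<Longrightarrow> (Gam \<alpha> b u p has_vector_derivative fld \<alpha> b (u t) (Gam \<alpha> b u p t)) (at t)"
    by (rule Gam_deriv[OF assms T, where \<alpha>=\<alpha> and b=b and p=p]) blast
  show "\<exists>S. finite S \<and> continuous_on {0..T} (Gam \<alpha> b u p) \<and>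
           (\<forall>s\<in>{0<..<T} - S. (Gam \<alpha> b u p has_vector_derivative fld \<alpha> b (u s) (Gam \<alpha> b u p s)) (at s))"
    by (intro exI[of _ S] conjI ballI S(1) S(2) S(3))
qed


lemma DER:
  assumes "fwd \<alpha> b u p \<gamma>" "pc u" "T > 0"
  obtains S where "finite S" "continuous_on {0..T} \<gamma>"
    "\<And>t. t \<in> {0<..<T} - S \<Longrightarrow> (\<gamma> has_vector_derivative fld \<alpha> b (u t) (\<gamma> t)) (at t)"
proof -
  define f where "f = (\<lambda>s. fld \<alpha> b (u s) (\<gamma> s))"
  have hi: "\<And>t. t \<ge> 0 \<Longrightarrow> (f has_integral \<gamma> t - p) {0..t}"
    using assms(1) unfolding fwd_def f_def by blast
  have fi: "f integrable_on {0..T}" using hi[of T] assms(3) by (auto simp: integrable_on_def)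
  have eq: "\<gamma> s = p + integral {0..s} f" if "s \<in> {0..T}" for s
    using hi[of s] that by (simp add: integral_unique)
  have cI: "continuous_on {0..T} (\<lambda>s. p + integral {0..s} f)"
    by (intro continuous_intros indefinite_integral_continuous_1[OF fi])
  have cg: "continuous_on {0..T} \<gamma>"
    by (rule continuous_on_eq[OF cI]) (use eq in auto)
  obtain S where S: "finite S" "\<And>t. t \<in> {-1<..<T+1} - S \<Longrightarrow> isCont u t"
    using pc_isCont[OF assms(2)] by blast
  have d: "(\<gamma> has_vector_derivative fld \<alpha> b (u t) (\<gamma> t)) (at t)" if t: "t \<in> {0<..<T} - S" for t
  proof -
    have c1: "continuous (at t within {0..T}) u" using S(2)[of t] t continuous_at_imp_continuous_at_within by auto
    have c2: "continuous (at t within {0..T}) \<gamma>"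
      using cg t unfolding continuous_on_eq_continuous_within by auto
    have cf: "continuous (at t within {0..T}) f"
      unfolding f_def fld_def by (intro continuous_intros c1 c2)
    have d1: "((\<lambda>s. integral {0..s} f) has_vector_derivative f t) (at t)"
      by (rule int_deriv[OF fi S(1) t cf])
    have d2: "((\<lambda>s. p + integral {0..s} f) has_vector_derivative f t) (at t)"
      using has_vector_derivative_add[OF has_vector_derivative_const d1] by simp
    show ?thesis
      using has_vector_derivative_transform_within_open[OF d2[unfolded f_def], of "{0<..<T}" \<gamma>] t eq by (auto simp: f_def)
  qed
  show ?thesis using that[OF S(1) cg d] by blast
qed

lemma zero_const:
  fixes w :: "real \<Rightarrow> real"
  assumes "t > 0" "finite S" "continuous_on {0..t} w" "\<And>s. s \<in> {0<..<t} - S \<Longrightarrow> (w has_real_derivative 0) (at s)"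
  shows "w t = w 0"
proof -
  have "((\<lambda>_. 0) has_integral w t - w 0) {0..t}"
    apply (rule fundamental_theorem_of_calculus_interior_strong[OF assms(2) _ _ assms(3)])
    using assms(1) apply simp
    using assms(4) unfolding has_real_derivative_iff_has_vector_derivative by simp
  then have "w t - w 0 = 0" using has_integral_unique[OF _ has_integral_0] by blast
  then show ?thesis by simp
qed

lemma fwd_unique:
  assumes f: "fwd \<alpha> b u p \<gamma>" and pc: "pc u" and t: "t \<ge> 0"
  shows "\<gamma> t = Gam \<alpha> b u p t"
proof -
  have g0: "\<gamma> 0 = p" using f unfolding fwd_def by simp
  have fx: "fst (\<gamma> t) = XX \<alpha> u (fst p) t" if t: "t \<ge> 0" for t
  proof (cases "t = 0")
    case True then show ?thesis using g0 by (simp add: XX_def UU_def)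
  next
    case False
    then have tp: "t > 0" using t by simp
    obtain S1 where S1: "finite S1" "continuous_on {0..t} \<gamma>"
      "\<And>s. s \<in> {0<..<t} - S1 \<Longrightarrow> (\<gamma> has_vector_derivative fld \<alpha> b (u s) (\<gamma> s)) (at s)"
      by (rule DER[OF f pc tp]) blast
    obtain S2 where S2: "finite S2" "continuous_on {0..t} (UU u)"
      "\<And>s. s \<in> {0<..<t} - S2 \<Longrightarrow> (UU u has_real_derivative u s) (at s)"
      by (rule constr[OF pc tp, where \<alpha>=\<alpha> and b=b and xz="fst p"]) blast
    define w where "w = (\<lambda>s. fst (\<gamma> s) * exp (- \<alpha> * UU u s))"
    have cw: "continuous_on {0..t} w" unfolding w_def by (intro continuous_intros S1(2) S2(2))
    have dw: "(w has_real_derivative 0) (at s)" if s: "s \<in> {0<..<t} - (S1 \<union> S2)" for s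
    proof -
      have d1: "((\<lambda>s. fst (\<gamma> s)) has_real_derivative u s * \<alpha> * fst (\<gamma> s)) (at s)"
        using vd_fst[OF S1(3)[of s]] s by (simp add: fld_def)
      have d2: "(UU u has_real_derivative u s) (at s)" using S2(3)[of s] s by blast
      show ?thesis unfolding w_def
        by (rule derivative_eq_intros d1 d2 refl | simp add: algebra_simps)+
    qed
    have "w t = w 0" by (rule zero_const[where S="S1 \<union> S2", OF tp _ cw dw]) (use S1(1) S2(1) in auto)
    then have e: "fst (\<gamma> t) * exp (- \<alpha> * UU u t) = fst p" using g0 by (simp add: w_def UU_def)
    have ee: "exp (- \<alpha> * UU u t) * exp (\<alpha> * UU u t) = 1" by (simp add: mult_exp_exp)
    have "fst (\<gamma> t) = fst (\<gamma> t) * (exp (- \<alpha> * UU u t) * exp (\<alpha> * UU u t))"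
      by (simp only: ee mult_1_right)
    also have "\<dots> = (fst (\<gamma> t) * exp (- \<alpha> * UU u t)) * exp (\<alpha> * UU u t)"
      by (simp only: mult.assoc)
    also have "\<dots> = fst p * exp (\<alpha> * UU u t)" by (simp only: e)
    finally show ?thesis by (simp add: XX_def)
  qed
  have sy: "snd (\<gamma> t) = YY \<alpha> b u (fst p) (snd p) t"
  proof (cases "t = 0")
    case True then show ?thesis using g0 by (simp add: YY_def VV_def)
  next
    case False
    then have tp: "t > 0" using t by simp
    obtain S1 where S1: "finite S1" "continuous_on {0..t} \<gamma>"
      "\<And>s. s \<in> {0<..<t} - S1 \<Longrightarrow> (\<gamma> has_vector_derivative fld \<alpha> b (u s) (\<gamma> s)) (at s)"
      by (rule DER[OF f pc tp]) blast
    obtain S2 where S2: "finite S2" "continuous_on {0..t} (VV \<alpha> b u (fst p))"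
      "\<And>s. s \<in> {0<..<t} - S2 \<Longrightarrow> (VV \<alpha> b u (fst p) has_real_derivative (exp (- b * s) * u s * XX \<alpha> u (fst p) s)) (at s)"
      by (rule constr[OF pc tp, where \<alpha>=\<alpha> and b=b and xz="fst p"]) blast
    define w where "w = (\<lambda>s. snd (\<gamma> s) * exp (- b * s) - VV \<alpha> b u (fst p) s)"
    have cw: "continuous_on {0..t} w" unfolding w_def by (intro continuous_intros S1(2) S2(2))
    have dw: "(w has_real_derivative 0) (at s)" if s: "s \<in> {0<..<t} - (S1 \<union> S2)" for s
    proof -
      have d1: "((\<lambda>s. snd (\<gamma> s)) has_real_derivative b * snd (\<gamma> s) + u s * XX \<alpha> u (fst p) s) (at s)"
        using vd_snd[OF S1(3)[of s]] s fx[of s] by (simp add: fld_def)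
      have d2: "(VV \<alpha> b u (fst p) has_real_derivative (exp (- b * s) * u s * XX \<alpha> u (fst p) s)) (at s)"
        using S2(3)[of s] s by blast
      show ?thesis unfolding w_def
        by (rule derivative_eq_intros d1 d2 refl | simp add: algebra_simps)+
    qed
    have "w t = w 0" by (rule zero_const[where S="S1 \<union> S2", OF tp _ cw dw]) (use S1(1) S2(1) in auto)
    then have e: "snd (\<gamma> t) * exp (- b * t) = snd p + VV \<alpha> b u (fst p) t" using g0 by (simp add: w_def VV_def)
    have ee: "exp (- b * t) * exp (b * t) = 1" by (simp add: mult_exp_exp)
    have "snd (\<gamma> t) = snd (\<gamma> t) * (exp (- b * t) * exp (b * t))"
      by (simp only: ee mult_1_right)
    also have "\<dots> = (snd (\<gamma> t) * exp (- b * t)) * exp (b * t)"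
      by (simp only: mult.assoc)
    also have "\<dots> = (snd p + VV \<alpha> b u (fst p) t) * exp (b * t)" by (simp only: e)
    finally show ?thesis by (simp add: YY_def mult.commute)
  qed
  show ?thesis using fx[OF t] sy by (simp add: Gam_def prod_eq_iff)
qed


lemma refl_int:
  fixes u :: "real \<Rightarrow> real" and \<gamma> :: "real \<Rightarrow> real \<times> real"
  shows "((\<lambda>s. fld \<alpha> (-b) (- u (- s)) (\<gamma> (- s))) has_integral \<gamma> (-t) - p) {0..t} \<longleftrightarrow>
   ((\<lambda>s. fld \<alpha> b (u s) (\<gamma> s)) has_integral p - \<gamma> (-t)) {-t..0}"
proof -
  define f where "f = (\<lambda>s. fld \<alpha> b (u s) (\<gamma> s))"
  have e: "(\<lambda>s. fld \<alpha> (-b) (- u (- s)) (\<gamma> (- s))) = (\<lambda>s. - f (- s))"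
    by (simp add: fld_def f_def fun_eq_iff)
  have "((\<lambda>s. - f (- s)) has_integral \<gamma> (-t) - p) {0..t} \<longleftrightarrow> ((\<lambda>s. f (- s)) has_integral p - \<gamma> (-t)) {0..t}"
    using has_integral_neg_iff[of "\<lambda>s. f (- s)" "\<gamma> (-t) - p" "{0..t}"] by simp
  also have "\<dots> \<longleftrightarrow> (f has_integral p - \<gamma> (-t)) {-t..0}"
    using has_integral_reflect_real[where f=f and i="p - \<gamma> (-t)" and a="-t" and b=0] by simp
  finally show ?thesis unfolding e f_def .
qed

lemma traj_iff:
  "is_traj \<alpha> b u p \<gamma> \<longleftrightarrow> fwd \<alpha> b u p \<gamma> \<and> fwd \<alpha> (-b) (\<lambda>s. - u (- s)) p (\<lambda>s. \<gamma> (- s))"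
proof -
  have "(\<forall>t\<le>0. ((\<lambda>s. fld \<alpha> b (u s) (\<gamma> s)) has_integral (p - \<gamma> t)) {t..0}) \<longleftrightarrow>
        (\<forall>t\<ge>0. ((\<lambda>s. fld \<alpha> b (u s) (\<gamma> s)) has_integral (p - \<gamma> (-t))) {-t..0})"
  proof
    assume A: "\<forall>t\<le>0. ((\<lambda>s. fld \<alpha> b (u s) (\<gamma> s)) has_integral (p - \<gamma> t)) {t..0}"
    show "\<forall>t\<ge>0. ((\<lambda>s. fld \<alpha> b (u s) (\<gamma> s)) has_integral (p - \<gamma> (-t))) {-t..0}"
    proof (intro allI impI)
      fix t :: real assume "t \<ge> 0" then have "-t \<le> 0" by simp
      then show "((\<lambda>s. fld \<alpha> b (u s) (\<gamma> s)) has_integral (p - \<gamma> (-t))) {-t..0}" using A by blast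
    qed
  next
    assume A: "\<forall>t\<ge>0. ((\<lambda>s. fld \<alpha> b (u s) (\<gamma> s)) has_integral (p - \<gamma> (-t))) {-t..0}"
    show "\<forall>t\<le>0. ((\<lambda>s. fld \<alpha> b (u s) (\<gamma> s)) has_integral (p - \<gamma> t)) {t..0}"
    proof (intro allI impI)
      fix t :: real assume "t \<le> 0" then have "-t \<ge> 0" by simp
      then have "((\<lambda>s. fld \<alpha> b (u s) (\<gamma> s)) has_integral (p - \<gamma> (- (-t)))) {- (-t)..0}" using A by blast
      then show "((\<lambda>s. fld \<alpha> b (u s) (\<gamma> s)) has_integral (p - \<gamma> t)) {t..0}" by simp
    qed
  qed
  also have "\<dots> \<longleftrightarrow> (\<forall>t\<ge>0. ((\<lambda>s. fld \<alpha> (-b) (- u (- s)) (\<gamma> (- s))) has_integral \<gamma> (-t) - p) {0..t})"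
    using refl_int by blast
  finally show ?thesis unfolding is_traj_def fwd_def by auto
qed

lemma phi_eq:
  assumes pc: "pc u" and f: "fwd \<alpha> b u p \<gamma>" and t: "t \<ge> 0"
  shows "phi \<alpha> b t p u = \<gamma> t"
proof -
  define ur where "ur = (\<lambda>s. - u (- s))"
  have pcr: "pc ur" unfolding ur_def by (rule pc_reflect[OF pc])
  define g where "g = (\<lambda>t. if t \<ge> 0 then Gam \<alpha> b u p t else Gam \<alpha> (-b) ur p (-t))"
  have f1: "fwd \<alpha> b u p (Gam \<alpha> b u p)" by (rule Gam_fwd[OF pc])
  have f2: "fwd \<alpha> (-b) ur p (Gam \<alpha> (-b) ur p)" by (rule Gam_fwd[OF pcr])
  have fg: "fwd \<alpha> b u p g"
    unfolding fwd_def
  proof (intro conjI allI impI)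
    show "g 0 = p" by (simp add: g_def Gam_0)
    fix t :: real assume t: "t \<ge> 0"
    have "((\<lambda>s. fld \<alpha> b (u s) (Gam \<alpha> b u p s)) has_integral Gam \<alpha> b u p t - p) {0..t}"
      using f1 t unfolding fwd_def by blast
    moreover have "\<And>s. s \<in> {0..t} \<Longrightarrow> fld \<alpha> b (u s) (Gam \<alpha> b u p s) = fld \<alpha> b (u s) (g s)"
      by (simp add: g_def)
    moreover have "g t = Gam \<alpha> b u p t" using t by (simp add: g_def)
    ultimately show "((\<lambda>s. fld \<alpha> b (u s) (g s)) has_integral g t - p) {0..t}"
      using has_integral_cong[of "{0..t}" "\<lambda>s. fld \<alpha> b (u s) (Gam \<alpha> b u p s)" "\<lambda>s. fld \<alpha> b (u s) (g s)"] by simp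
  qed
  have fgr: "fwd \<alpha> (-b) ur p (\<lambda>s. g (- s))"
    unfolding fwd_def
  proof (intro conjI allI impI)
    show "g (- 0) = p" by (simp add: g_def Gam_0)
    fix t :: real assume t: "t \<ge> 0"
    have eq: "g (- s) = Gam \<alpha> (-b) ur p s" if "s \<ge> 0" for s
      using that by (cases "s = 0") (auto simp: g_def Gam_0)
    have "((\<lambda>s. fld \<alpha> (-b) (ur s) (Gam \<alpha> (-b) ur p s)) has_integral Gam \<alpha> (-b) ur p t - p) {0..t}"
      using f2 t unfolding fwd_def by blast
    moreover have "\<And>s. s \<in> {0..t} \<Longrightarrow> fld \<alpha> (-b) (ur s) (Gam \<alpha> (-b) ur p s) = fld \<alpha> (-b) (ur s) (g (- s))"
      using eq by simp
    ultimately show "((\<lambda>s. fld \<alpha> (-b) (ur s) (g (- s))) has_integral g (- t) - p) {0..t}"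
      using has_integral_cong[of "{0..t}" "\<lambda>s. fld \<alpha> (-b) (ur s) (Gam \<alpha> (-b) ur p s)" "\<lambda>s. fld \<alpha> (-b) (ur s) (g (- s))"] eq[OF t] by simp
  qed
  have tg: "is_traj \<alpha> b u p g" unfolding traj_iff using fg fgr unfolding ur_def by blast
  have uq: "\<gamma>' = g" if "is_traj \<alpha> b u p \<gamma>'" for \<gamma>'
  proof
    fix t :: real
    have a: "fwd \<alpha> b u p \<gamma>'" "fwd \<alpha> (-b) ur p (\<lambda>s. \<gamma>' (- s))" using that unfolding traj_iff ur_def by auto
    show "\<gamma>' t = g t"
    proof (cases "t \<ge> 0")
      case True then show ?thesis using fwd_unique[OF a(1) pc True] by (simp add: g_def)
    next
      case False
      then have "-t \<ge> 0" by simp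
      from fwd_unique[OF a(2) pcr this] show ?thesis using False by (simp add: g_def)
    qed
  qed
  have "(THE \<gamma>. is_traj \<alpha> b u p \<gamma>) = g" by (rule the_equality[where P="\<lambda>\<gamma>. is_traj \<alpha> b u p \<gamma>", OF tg uq])
  then have "phi \<alpha> b t p u = g t" unfolding phi_def by simp
  also have "\<dots> = Gam \<alpha> b u p t" using t by (simp add: g_def)
  also have "\<dots> = \<gamma> t" using fwd_unique[OF f pc t] by simp
  finally show ?thesis .
qed


lemma pc_const: "pc (\<lambda>_. c)"
  unfolding pc_def by (intro conjI allI exI[of _ "\<bar>c\<bar>"] exI[of _ "{}"]) (auto intro: exI[of _ 1])

definition gc :: "real \<Rightarrow> real \<Rightarrow> real \<Rightarrow> real \<times> real \<Rightarrow> real \<Rightarrow> real \<times> real" where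
  "gc \<alpha> b c p t = (fst p * exp (c * \<alpha> * t),
     slope \<alpha> b c * fst p * exp (c * \<alpha> * t) + (snd p - slope \<alpha> b c * fst p) * exp (b * t))"

lemma gc_fwd:
  assumes K: "c * \<alpha> - b \<noteq> 0"
  shows "fwd \<alpha> b (\<lambda>_. c) p (gc \<alpha> b c p)"
proof (rule fwd_I)
  show "gc \<alpha> b c p 0 = p" by (simp add: gc_def)
  fix T :: real assume "T > 0"
  define m where "m = slope \<alpha> b c"
  have mm: "m * (c * \<alpha>) = b * m + c" using K by (simp add: m_def slope_def field_simps)
  have d: "(gc \<alpha> b c p has_vector_derivative fld \<alpha> b c (gc \<alpha> b c p s)) (at s)" for s
  proof -
    have dX: "((\<lambda>t. fst p * exp (c * \<alpha> * t)) has_real_derivative c * \<alpha> * (fst p * exp (c * \<alpha> * s))) (at s)"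
      by (rule derivative_eq_intros refl | simp)+
    have dY: "((\<lambda>t. m * fst p * exp (c * \<alpha> * t) + (snd p - m * fst p) * exp (b * t)) has_real_derivative
       b * (m * fst p * exp (c * \<alpha> * s) + (snd p - m * fst p) * exp (b * s)) + c * (fst p * exp (c * \<alpha> * s))) (at s)"
    proof -
      have "((\<lambda>t. m * fst p * exp (c * \<alpha> * t) + (snd p - m * fst p) * exp (b * t)) has_real_derivative
         m * fst p * (exp (c * \<alpha> * s) * (c * \<alpha>)) + (snd p - m * fst p) * (exp (b * s) * b)) (at s)"
        by (rule derivative_eq_intros refl | simp)+
      moreover have "m * fst p * (exp (c * \<alpha> * s) * (c * \<alpha>)) + (snd p - m * fst p) * (exp (b * s) * b)
          = b * (m * fst p * exp (c * \<alpha> * s) + (snd p - m * fst p) * exp (b * s)) + c * (fst p * exp (c * \<alpha> * s))"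
      proof -
        have "m * fst p * (exp (c * \<alpha> * s) * (c * \<alpha>)) = (m * (c * \<alpha>)) * fst p * exp (c * \<alpha> * s)" by simp
        also have "\<dots> = (b * m + c) * fst p * exp (c * \<alpha> * s)" by (simp only: mm)
        finally show ?thesis by (simp add: algebra_simps)
      qed
      ultimately show ?thesis by simp
    qed
    show ?thesis
      using has_vector_derivative_Pair[OF dX[unfolded has_real_derivative_iff_has_vector_derivative]
          dY[unfolded has_real_derivative_iff_has_vector_derivative]]
      unfolding m_def by (simp add: gc_def[abs_def] fld_def mult.assoc)
  qed
  have c: "continuous_on {0..T} (gc \<alpha> b c p)" unfolding gc_def by (intro continuous_intros)
  show "\<exists>S. finite S \<and> continuous_on {0..T} (gc \<alpha> b c p) \<and>
           (\<forall>s\<in>{0<..<T} - S. (gc \<alpha> b c p has_vector_derivative fld \<alpha> b c (gc \<alpha> b c p s)) (at s))"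
    using c d by blast
qed

lemma phi_const:
  assumes "c * \<alpha> - b \<noteq> 0" "t \<ge> 0"
  shows "phi \<alpha> b t p (\<lambda>_. c) = gc \<alpha> b c p t"
  by (rule phi_eq[OF pc_const gc_fwd[OF assms(1)] assms(2)])

lemma slope_le:
  assumes "b < 0" "u * \<alpha> - b > 0" "v * \<alpha> - b > 0"
  shows "slope \<alpha> b u \<le> slope \<alpha> b v \<longleftrightarrow> u \<le> v"
proof -
  have "slope \<alpha> b u \<le> slope \<alpha> b v \<longleftrightarrow> u * (v * \<alpha> - b) \<le> v * (u * \<alpha> - b)"
    using assms unfolding slope_def by (simp add: divide_simps)
  also have "\<dots> \<longleftrightarrow> - (u * b) \<le> - (v * b)" by (simp add: algebra_simps)
  also have "\<dots> \<longleftrightarrow> u \<le> v" using assms(1) by (simp add: mult_le_cancel_right)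
  finally show ?thesis .
qed

lemma slope_less:
  assumes "b < 0" "u * \<alpha> - b > 0" "v * \<alpha> - b > 0"
  shows "slope \<alpha> b u < slope \<alpha> b v \<longleftrightarrow> u < v"
  using slope_le[OF assms(1,3,2)] by (simp add: not_le[symmetric])

lemma slope_inv:
  assumes "b < 0" "m * \<alpha> - 1 < 0"
  defines "w \<equiv> m * b / (m * \<alpha> - 1)"
  shows "w * \<alpha> - b > 0" "slope \<alpha> b w = m"
proof -
  have ne: "m * \<alpha> - 1 \<noteq> 0" using assms(2) by simp
  have e: "w * \<alpha> - b = b / (m * \<alpha> - 1)" unfolding w_def using ne by (simp add: field_simps)
  show "w * \<alpha> - b > 0" unfolding e using assms(1,2) by (simp add: divide_neg_neg)
  show "slope \<alpha> b w = m" unfolding slope_def e unfolding w_def using ne assms(1) by (simp add: field_simps)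
qed

lemma slope_alpha:
  assumes "b < 0" "u * \<alpha> - b > 0"
  shows "slope \<alpha> b u * \<alpha> - 1 < 0"
proof -
  have "slope \<alpha> b u * \<alpha> - 1 = b / (u * \<alpha> - b)" using assms unfolding slope_def by (simp add: field_simps)
  then show ?thesis using assms by (simp add: divide_neg_pos)
qed


lemma w_int:
  assumes pc: "pc u" and t: "t > 0"
  shows "((\<lambda>s. exp (- b * s) * XX \<alpha> u x0 s * (u s * (1 - m * \<alpha>) + m * b)) has_integral
     ((VV \<alpha> b u x0 t - m * exp (- b * t) * XX \<alpha> u x0 t) - (VV \<alpha> b u x0 0 - m * exp (- b * 0) * XX \<alpha> u x0 0))) {0..t}"
proof -
  obtain S where S: "finite S" "continuous_on {0..t} (UU u)" "continuous_on {0..t} (VV \<alpha> b u x0)"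
    "\<And>s. s \<in> {0<..<t} - S \<Longrightarrow> (UU u has_real_derivative u s) (at s)"
    "\<And>s. s \<in> {0<..<t} - S \<Longrightarrow> (VV \<alpha> b u x0 has_real_derivative (exp (- b * s) * u s * XX \<alpha> u x0 s)) (at s)"
    by (rule constr[OF pc t, where \<alpha>=\<alpha> and b=b and xz=x0]) blast
  define w where "w = (\<lambda>s. VV \<alpha> b u x0 s - m * exp (- b * s) * XX \<alpha> u x0 s)"
  have cw: "continuous_on {0..t} w" unfolding w_def XX_def by (intro continuous_intros S(2) S(3))
  have dw: "(w has_real_derivative exp (- b * s) * XX \<alpha> u x0 s * (u s * (1 - m * \<alpha>) + m * b)) (at s)"
    if s: "s \<in> {0<..<t} - S" for s
  proof -
    have dX: "(XX \<alpha> u x0 has_real_derivative u s * \<alpha> * XX \<alpha> u x0 s) (at s)"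
      unfolding XX_def by (rule derivative_eq_intros S(4)[OF s] refl | simp)+
    have "(w has_real_derivative exp (- b * s) * u s * XX \<alpha> u x0 s -
        m * (exp (- b * s) * (- b) * XX \<alpha> u x0 s + exp (- b * s) * (u s * \<alpha> * XX \<alpha> u x0 s))) (at s)"
      unfolding w_def apply (rule derivative_eq_intros S(5)[OF s] dX refl | simp)+ by algebra
    moreover have "exp (- b * s) * u s * XX \<alpha> u x0 s -
        m * (exp (- b * s) * (- b) * XX \<alpha> u x0 s + exp (- b * s) * (u s * \<alpha> * XX \<alpha> u x0 s))
      = exp (- b * s) * XX \<alpha> u x0 s * (u s * (1 - m * \<alpha>) + m * b)"
      by (simp add: algebra_simps)
    ultimately show ?thesis by simp
  qed
  have "((\<lambda>s. exp (- b * s) * XX \<alpha> u x0 s * (u s * (1 - m * \<alpha>) + m * b)) has_integral w t - w 0) {0..t}"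
    apply (rule fundamental_theorem_of_calculus_interior_strong[OF S(1) _ _ cw])
    using t apply simp
    using dw unfolding has_real_derivative_iff_has_vector_derivative by blast
  then show ?thesis unfolding w_def .
qed

lemma factor:
  assumes "v * \<alpha> - b > 0"
  shows "x * (1 - slope \<alpha> b v * \<alpha>) + slope \<alpha> b v * b = b * (v - x) / (v * \<alpha> - b)"
proof -
  have K: "v * \<alpha> - b \<noteq> 0" using assms by simp
  define K where "K = v * \<alpha> - b"
  have K0: "K \<noteq> 0" using K K_def by simp
  have e1: "1 - v / K * \<alpha> = - b / K" using K0 unfolding K_def by (simp add: field_simps)
  have "x * (1 - v / K * \<alpha>) + v / K * b = x * (- b / K) + v / K * b" by (simp only: e1)
  also have "\<dots> = b * (v - x) / K" using K0 by (simp add: field_simps)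
  finally show ?thesis unfolding slope_def K_def .
qed

lemma YY_rel:
  "snd (Gam \<alpha> b u p t) - m * fst (Gam \<alpha> b u p t) =
   exp (b * t) * (snd p + (VV \<alpha> b u (fst p) t - m * exp (- b * t) * XX \<alpha> u (fst p) t))"
proof -
  have "exp (b * t) * (m * exp (- b * t) * XX \<alpha> u (fst p) t) = m * XX \<alpha> u (fst p) t * (exp (b * t) * exp (- b * t))"
    by (simp add: algebra_simps)
  also have "\<dots> = m * XX \<alpha> u (fst p) t" by (simp add: mult_exp_exp)
  finally have e: "exp (b * t) * (m * exp (- b * t) * XX \<alpha> u (fst p) t) = m * XX \<alpha> u (fst p) t" .
  show ?thesis unfolding Gam_def YY_def fst_conv snd_conv using e by (simp add: algebra_simps)
qed

lemma XX_pos: "x0 > 0 \<Longrightarrow> XX \<alpha> u x0 t > 0" by (simp add: XX_def)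

lemma VV0: "VV \<alpha> b u x0 0 = 0" by (simp add: VV_def)
lemma XX0: "XX \<alpha> u x0 0 = x0" by (simp add: XX_def UU_def)

lemma upper:
  assumes pc: "pc u" and t: "t \<ge> 0" and b: "b < 0" and v: "v * \<alpha> - b > 0" and uv: "\<And>s. u s \<le> v"
    and x: "fst p > 0" and p: "snd p \<le> slope \<alpha> b v * fst p"
  shows "snd (Gam \<alpha> b u p t) \<le> slope \<alpha> b v * fst (Gam \<alpha> b u p t)"
proof (cases "t = 0")
  case True then show ?thesis using p by (simp add: Gam_0)
next
  case False
  then have tp: "t > 0" using t by simp
  define m where "m = slope \<alpha> b v"
  have I: "((\<lambda>s. exp (- b * s) * XX \<alpha> u (fst p) s * (u s * (1 - m * \<alpha>) + m * b)) has_integral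
     ((VV \<alpha> b u (fst p) t - m * exp (- b * t) * XX \<alpha> u (fst p) t) - (0 - m * fst p))) {0..t}"
    using w_int[OF pc tp, of b \<alpha> "fst p" m] by (simp add: VV0 XX0)
  have nonpos: "exp (- b * s) * XX \<alpha> u (fst p) s * (u s * (1 - m * \<alpha>) + m * b) \<le> 0" for s
  proof -
    have "u s * (1 - m * \<alpha>) + m * b = b * (v - u s) / (v * \<alpha> - b)" unfolding m_def by (rule factor[OF v])
    also have "\<dots> \<le> 0" using b v uv[of s] by (intro divide_nonpos_pos mult_nonpos_nonneg) auto
    finally have "u s * (1 - m * \<alpha>) + m * b \<le> 0" .
    moreover have "exp (- b * s) * XX \<alpha> u (fst p) s > 0" using XX_pos[OF x] by simp
    ultimately show ?thesis
      using mult_nonneg_nonpos[of "exp (- b * s) * XX \<alpha> u (fst p) s" "u s * (1 - m * \<alpha>) + m * b"] by simp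
  qed
  have "(VV \<alpha> b u (fst p) t - m * exp (- b * t) * XX \<alpha> u (fst p) t) - (0 - m * fst p) \<le> 0"
    using has_integral_le[OF I has_integral_0] nonpos by blast
  then have "snd p + (VV \<alpha> b u (fst p) t - m * exp (- b * t) * XX \<alpha> u (fst p) t) \<le> 0"
    using p unfolding m_def by simp
  then have "exp (b * t) * (snd p + (VV \<alpha> b u (fst p) t - m * exp (- b * t) * XX \<alpha> u (fst p) t)) \<le> 0"
    by (simp add: mult_nonneg_nonpos)
  then show ?thesis using YY_rel[of \<alpha> b u p t m] unfolding m_def by simp
qed

lemma lower:
  assumes pc: "pc u" and t: "t \<ge> 0" and b: "b < 0" and v: "v * \<alpha> - b > 0" and uv: "\<And>s. v \<le> u s"
    and x: "fst p > 0" and p: "snd p \<ge> slope \<alpha> b v * fst p"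
  shows "snd (Gam \<alpha> b u p t) \<ge> slope \<alpha> b v * fst (Gam \<alpha> b u p t)"
proof (cases "t = 0")
  case True then show ?thesis using p by (simp add: Gam_0)
next
  case False
  then have tp: "t > 0" using t by simp
  define m where "m = slope \<alpha> b v"
  have I: "((\<lambda>s. exp (- b * s) * XX \<alpha> u (fst p) s * (u s * (1 - m * \<alpha>) + m * b)) has_integral
     ((VV \<alpha> b u (fst p) t - m * exp (- b * t) * XX \<alpha> u (fst p) t) - (0 - m * fst p))) {0..t}"
    using w_int[OF pc tp, of b \<alpha> "fst p" m] by (simp add: VV0 XX0)
  have nonneg: "exp (- b * s) * XX \<alpha> u (fst p) s * (u s * (1 - m * \<alpha>) + m * b) \<ge> 0" for s
  proof -
    have "u s * (1 - m * \<alpha>) + m * b = b * (v - u s) / (v * \<alpha> - b)" unfolding m_def by (rule factor[OF v])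
    also have "\<dots> \<ge> 0" using b v uv[of s] by (intro divide_nonneg_pos mult_nonpos_nonpos) auto
    finally have "u s * (1 - m * \<alpha>) + m * b \<ge> 0" .
    moreover have "exp (- b * s) * XX \<alpha> u (fst p) s > 0" using XX_pos[OF x] by simp
    ultimately show ?thesis by simp
  qed
  have "(VV \<alpha> b u (fst p) t - m * exp (- b * t) * XX \<alpha> u (fst p) t) - (0 - m * fst p) \<ge> 0"
    using has_integral_nonneg[OF I] nonneg by blast
  then have "snd p + (VV \<alpha> b u (fst p) t - m * exp (- b * t) * XX \<alpha> u (fst p) t) \<ge> 0"
    using p unfolding m_def by simp
  then have "exp (b * t) * (snd p + (VV \<alpha> b u (fst p) t - m * exp (- b * t) * XX \<alpha> u (fst p) t)) \<ge> 0"
    by simp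
  then show ?thesis using YY_rel[of \<alpha> b u p t m] unfolding m_def by simp
qed


lemma adm_pc: assumes "admissible umin umax u" shows "pc u"
proof -
  have "\<forall>t. \<bar>u t\<bar> \<le> max \<bar>umin\<bar> \<bar>umax\<bar>"
  proof
    fix t have "u t \<in> {umin..umax}" using assms unfolding admissible_def Omega_def by blast
    then show "\<bar>u t\<bar> \<le> max \<bar>umin\<bar> \<bar>umax\<bar>" by auto
  qed
  then show ?thesis using assms unfolding admissible_def pc_def by blast
qed

lemma adm_range: "admissible umin umax u \<Longrightarrow> umin \<le> u s \<and> u s \<le> umax"
  unfolding admissible_def Omega_def by auto

lemma allB:
  assumes "umin < 0" "0 < umax" "\<alpha> \<noteq> 0" "b < 0" "b \<notin> (\<lambda>u. \<alpha> * u) ` Omega umin umax"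
    and u: "u \<in> Omega umin umax"
  shows "u * \<alpha> - b > 0"
proof (rule ccontr)
  assume "\<not> u * \<alpha> - b > 0"
  then have ub: "u * \<alpha> \<le> b" by simp
  define w where "w = b / \<alpha>"
  have aw: "\<alpha> * w = b" using assms(3) unfolding w_def by simp
  have "w \<in> Omega umin umax"
  proof (cases "\<alpha> > 0")
    case True
    then have "u \<le> w" using ub unfolding w_def by (simp add: pos_le_divide_eq)
    moreover have "w < 0" using True assms(4) unfolding w_def by (simp add: divide_neg_pos)
    ultimately show ?thesis using u assms(2) unfolding Omega_def by auto
  next
    case False
    then have a: "\<alpha> < 0" using assms(3) by simp
    then have "w \<le> u" using ub unfolding w_def by (simp add: neg_divide_le_eq)
    moreover have "w > 0" using a assms(4) unfolding w_def by (simp add: divide_neg_neg)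
    ultimately show ?thesis using u assms(1) unfolding Omega_def by auto
  qed
  then show False using assms(5) aw by force
qed

lemma ray_mem: "p \<in> ray \<alpha> b u \<longleftrightarrow> fst p > 0 \<and> snd p = slope \<alpha> b u * fst p"
  unfolding ray_def G_def by auto

lemma Cset_mem: "p \<in> Cset \<alpha> b umin umax \<longleftrightarrow> (\<exists>u. u \<in> Omega umin umax \<and> u * \<alpha> - b > 0 \<and> p \<in> ray \<alpha> b u)"
  unfolding Cset_def Bset_def by auto

lemma realize:
  assumes "b < 0" "m * \<alpha> - 1 < 0" "fst p > 0" "snd p = m * fst p"
    and "\<And>w. w * \<alpha> - b > 0 \<Longrightarrow> slope \<alpha> b w = m \<Longrightarrow> w \<in> Omega umin umax"
  shows "p \<in> Cset \<alpha> b umin umax"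
proof -
  define w where "w = m * b / (m * \<alpha> - 1)"
  have w1: "w * \<alpha> - b > 0" and w2: "slope \<alpha> b w = m"
    using slope_inv[OF assms(1,2)] unfolding w_def by auto
  show ?thesis unfolding Cset_mem ray_mem using w1 w2 assms(3,4) assms(5)[OF w1 w2] by auto
qed

lemma part1:
  assumes "umin < 0" "0 < umax" "\<alpha> \<noteq> 0" "b < 0" and nb: "b \<notin> (\<lambda>u. \<alpha> * u) ` Omega umin umax"
  shows "Cset \<alpha> b umin umax = {p \<in> G. slope \<alpha> b umin * fst p \<le> snd p \<and> snd p \<le> slope \<alpha> b umax * fst p}"
proof -
  have aB: "\<And>u. u \<in> Omega umin umax \<Longrightarrow> u * \<alpha> - b > 0" using allB[OF assms] by blast
  have mn: "umin \<in> Omega umin umax" "umax \<in> Omega umin umax" using assms unfolding Omega_def by auto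
  note bmin = aB[OF mn(1)] and bmax = aB[OF mn(2)]
  show ?thesis
  proof
    show "Cset \<alpha> b umin umax \<subseteq> {p \<in> G. slope \<alpha> b umin * fst p \<le> snd p \<and> snd p \<le> slope \<alpha> b umax * fst p}"
    proof
      fix p assume "p \<in> Cset \<alpha> b umin umax"
      then obtain u where u: "u \<in> Omega umin umax" "u * \<alpha> - b > 0" "fst p > 0" "snd p = slope \<alpha> b u * fst p"
        unfolding Cset_mem ray_mem by blast
      have "slope \<alpha> b umin \<le> slope \<alpha> b u" using slope_le[OF assms(4) bmin u(2)] u(1) unfolding Omega_def by simp
      moreover have "slope \<alpha> b u \<le> slope \<alpha> b umax" using slope_le[OF assms(4) u(2) bmax] u(1) unfolding Omega_def by simp
      ultimately show "p \<in> {p \<in> G. slope \<alpha> b umin * fst p \<le> snd p \<and> snd p \<le> slope \<alpha> b umax * fst p}"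
        using u(3,4) unfolding G_def by (auto intro: mult_right_mono)
    qed
  next
    show "{p \<in> G. slope \<alpha> b umin * fst p \<le> snd p \<and> snd p \<le> slope \<alpha> b umax * fst p} \<subseteq> Cset \<alpha> b umin umax"
    proof
      fix p assume "p \<in> {p \<in> G. slope \<alpha> b umin * fst p \<le> snd p \<and> snd p \<le> slope \<alpha> b umax * fst p}"
      then have p: "fst p > 0" "slope \<alpha> b umin * fst p \<le> snd p" "snd p \<le> slope \<alpha> b umax * fst p"
        unfolding G_def by auto
      define m where "m = snd p / fst p"
      have sp: "snd p = m * fst p" using p(1) unfolding m_def by simp
      have m1: "slope \<alpha> b umin \<le> m" using p(1,2) unfolding m_def by (simp add: pos_le_divide_eq)
      have m2: "m \<le> slope \<alpha> b umax" using p(1,3) unfolding m_def by (simp add: pos_divide_le_eq)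
      have am: "m * \<alpha> - 1 < 0"
      proof (cases "\<alpha> > 0")
        case True
        then have "m * \<alpha> \<le> slope \<alpha> b umax * \<alpha>" using m2 by (simp add: mult_right_mono)
        then show ?thesis using slope_alpha[OF assms(4) bmax] by linarith
      next
        case False
        then have "m * \<alpha> \<le> slope \<alpha> b umin * \<alpha>" using m1 by (simp add: mult_right_mono_neg)
        then show ?thesis using slope_alpha[OF assms(4) bmin] by linarith
      qed
      show "p \<in> Cset \<alpha> b umin umax"
      proof (rule realize[OF assms(4) am p(1) sp])
        fix w assume w: "w * \<alpha> - b > 0" "slope \<alpha> b w = m"
        have "umin \<le> w" using slope_le[OF assms(4) bmin w(1)] m1 w(2) by simp
        moreover have "w \<le> umax" using slope_le[OF assms(4) w(1) bmax] m2 w(2) by simp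
        ultimately show "w \<in> Omega umin umax" unfolding Omega_def by simp
      qed
    qed
  qed
qed

lemma imgw_lem:
  assumes "\<alpha> \<noteq> 0" "b \<in> (\<lambda>u. \<alpha> * u) ` Omega umin umax"
  shows "umin \<le> b / \<alpha>" "b / \<alpha> \<le> umax"
proof -
  obtain w where w: "w \<in> Omega umin umax" "b = \<alpha> * w" using assms(2) by blast
  have "b / \<alpha> = w" using w(2) assms(1) by simp
  then show "umin \<le> b / \<alpha>" "b / \<alpha> \<le> umax" using w(1) unfolding Omega_def by auto
qed

lemma part2a:
  assumes "umin < 0" "0 < umax" "\<alpha> > 0" "b < 0" and ib: "b \<in> (\<lambda>u. \<alpha> * u) ` Omega umin umax"
  shows "Cset \<alpha> b umin umax = {p \<in> G. snd p \<le> slope \<alpha> b umax * fst p}"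
proof -
  have "umax * \<alpha> > 0" using assms by simp
  then have bmax: "umax * \<alpha> - b > 0" using assms by linarith
  have wmin: "umin \<le> b / \<alpha>" using imgw_lem[of \<alpha> b umin umax] assms by simp
  show ?thesis
  proof
    show "Cset \<alpha> b umin umax \<subseteq> {p \<in> G. snd p \<le> slope \<alpha> b umax * fst p}"
    proof
      fix p assume "p \<in> Cset \<alpha> b umin umax"
      then obtain u where u: "u \<in> Omega umin umax" "u * \<alpha> - b > 0" "fst p > 0" "snd p = slope \<alpha> b u * fst p"
        unfolding Cset_mem ray_mem by blast
      have "slope \<alpha> b u \<le> slope \<alpha> b umax" using slope_le[OF assms(4) u(2) bmax] u(1) unfolding Omega_def by simp
      then show "p \<in> {p \<in> G. snd p \<le> slope \<alpha> b umax * fst p}"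
        using u(3,4) unfolding G_def by (auto intro: mult_right_mono)
    qed
  next
    show "{p \<in> G. snd p \<le> slope \<alpha> b umax * fst p} \<subseteq> Cset \<alpha> b umin umax"
    proof
      fix p assume "p \<in> {p \<in> G. snd p \<le> slope \<alpha> b umax * fst p}"
      then have p: "fst p > 0" "snd p \<le> slope \<alpha> b umax * fst p" unfolding G_def by auto
      define m where "m = snd p / fst p"
      have sp: "snd p = m * fst p" using p(1) unfolding m_def by simp
      have m2: "m \<le> slope \<alpha> b umax" using p(1,2) unfolding m_def by (simp add: pos_divide_le_eq)
      have am: "m * \<alpha> - 1 < 0"
      proof -
        have "m * \<alpha> \<le> slope \<alpha> b umax * \<alpha>" using m2 assms(3) by (simp add: mult_right_mono)
        then show ?thesis using slope_alpha[OF assms(4) bmax] by linarith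
      qed
      show "p \<in> Cset \<alpha> b umin umax"
      proof (rule realize[OF assms(4) am p(1) sp])
        fix w assume w: "w * \<alpha> - b > 0" "slope \<alpha> b w = m"
        have "b / \<alpha> < w" using w(1) assms(3) by (simp add: divide_less_eq)
        then have "umin \<le> w" using wmin by simp
        moreover have "w \<le> umax" using slope_le[OF assms(4) w(1) bmax] m2 w(2) by simp
        ultimately show "w \<in> Omega umin umax" unfolding Omega_def by simp
      qed
    qed
  qed
qed

lemma part2b:
  assumes "umin < 0" "0 < umax" "\<alpha> < 0" "b < 0" and ib: "b \<in> (\<lambda>u. \<alpha> * u) ` Omega umin umax"
  shows "Cset \<alpha> b umin umax = {p \<in> G. snd p \<ge> slope \<alpha> b umin * fst p}"
proof -
  have "umin * \<alpha> > 0" using assms by (simp add: mult_neg_neg)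
  then have bmin: "umin * \<alpha> - b > 0" using assms by linarith
  have wmax: "b / \<alpha> \<le> umax" using imgw_lem[of \<alpha> b umin umax] assms by simp
  show ?thesis
  proof
    show "Cset \<alpha> b umin umax \<subseteq> {p \<in> G. snd p \<ge> slope \<alpha> b umin * fst p}"
    proof
      fix p assume "p \<in> Cset \<alpha> b umin umax"
      then obtain u where u: "u \<in> Omega umin umax" "u * \<alpha> - b > 0" "fst p > 0" "snd p = slope \<alpha> b u * fst p"
        unfolding Cset_mem ray_mem by blast
      have "slope \<alpha> b umin \<le> slope \<alpha> b u" using slope_le[OF assms(4) bmin u(2)] u(1) unfolding Omega_def by simp
      then show "p \<in> {p \<in> G. snd p \<ge> slope \<alpha> b umin * fst p}"
        using u(3,4) unfolding G_def by (auto intro: mult_right_mono)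
    qed
  next
    show "{p \<in> G. snd p \<ge> slope \<alpha> b umin * fst p} \<subseteq> Cset \<alpha> b umin umax"
    proof
      fix p assume "p \<in> {p \<in> G. snd p \<ge> slope \<alpha> b umin * fst p}"
      then have p: "fst p > 0" "slope \<alpha> b umin * fst p \<le> snd p" unfolding G_def by auto
      define m where "m = snd p / fst p"
      have sp: "snd p = m * fst p" using p(1) unfolding m_def by simp
      have m1: "slope \<alpha> b umin \<le> m" using p(1,2) unfolding m_def by (simp add: pos_le_divide_eq)
      have am: "m * \<alpha> - 1 < 0"
      proof -
        have "m * \<alpha> \<le> slope \<alpha> b umin * \<alpha>" using m1 assms(3) by (simp add: mult_right_mono_neg)
        then show ?thesis using slope_alpha[OF assms(4) bmin] by linarith
      qed
      show "p \<in> Cset \<alpha> b umin umax"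
      proof (rule realize[OF assms(4) am p(1) sp])
        fix w assume w: "w * \<alpha> - b > 0" "slope \<alpha> b w = m"
        have "w < b / \<alpha>" using w(1) assms(3) by (simp add: less_divide_eq)
        then have "w \<le> umax" using wmax by simp
        moreover have "umin \<le> w" using slope_le[OF assms(4) bmin w(1)] m1 w(2) by simp
        ultimately show "w \<in> Omega umin umax" unfolding Omega_def by simp
      qed
    qed
  qed
qed


lemma gc_ray:
  assumes K: "K = c * \<alpha> - b" and E: "exp (K * t0) = r" and rr: "r * (m2 - slope \<alpha> b c) = m1 - slope \<alpha> b c"
    and p: "snd p = m1 * fst p"
  shows "fst (gc \<alpha> b c p t0) = fst p * exp (c * \<alpha> * t0)"
    "snd (gc \<alpha> b c p t0) = m2 * fst (gc \<alpha> b c p t0)"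
proof -
  show "fst (gc \<alpha> b c p t0) = fst p * exp (c * \<alpha> * t0)" by (simp add: gc_def)
  define mc where "mc = slope \<alpha> b c"
  define eb where "eb = exp (b * t0)"
  have "c * \<alpha> * t0 = K * t0 + b * t0" unfolding K by (simp add: algebra_simps)
  then have EE: "exp (c * \<alpha> * t0) = r * eb" using E unfolding eb_def by (simp add: exp_add)
  have "snd (gc \<alpha> b c p t0) = mc * fst p * (r * eb) + (m1 * fst p - mc * fst p) * eb"
    using p EE by (simp add: gc_def mc_def eb_def)
  also have "\<dots> = fst p * eb * (mc * r + (m1 - mc))" by (simp add: algebra_simps)
  also have "\<dots> = fst p * eb * (mc * r + r * (m2 - mc))" using rr by (simp add: mc_def)
  also have "\<dots> = m2 * (fst p * (r * eb))" by (simp add: algebra_simps)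
  also have "\<dots> = m2 * fst (gc \<alpha> b c p t0)" using EE by (simp add: gc_def)
  finally show "snd (gc \<alpha> b c p t0) = m2 * fst (gc \<alpha> b c p t0)" .
qed

lemma Bset_mem: "u \<in> Bset \<alpha> b umin umax \<longleftrightarrow> u \<in> Omega umin umax \<and> u * \<alpha> - b > 0"
  unfolding Bset_def by simp

lemma part3:
  assumes b: "b < 0" and u1: "u1 \<in> interior (Bset \<alpha> b umin umax)" and u2: "u2 \<in> interior (Bset \<alpha> b umin umax)"
    and ne: "u1 \<noteq> u2"
  shows "\<exists>t0 > 0. \<exists>u \<in> Omega umin umax. (\<lambda>p. phi \<alpha> b t0 p (\<lambda>_. u)) ` ray \<alpha> b u1 = ray \<alpha> b u2"
proof -
  have "u1 \<in> Bset \<alpha> b umin umax" using interior_subset u1 by (rule subsetD)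
  then have B1: "u1 * \<alpha> - b > 0" unfolding Bset_mem by simp
  have "u2 \<in> Bset \<alpha> b umin umax" using interior_subset u2 by (rule subsetD)
  then have B2: "u2 * \<alpha> - b > 0" unfolding Bset_mem by simp
  obtain e where e: "e > 0" "ball u2 e \<subseteq> Bset \<alpha> b umin umax" using u2 mem_interior by blast
  define c where "c = (if u2 < u1 then u2 - e / 2 else u2 + e / 2)"
  have "dist u2 c < e" using e(1) unfolding c_def by (simp add: dist_real_def)
  then have "c \<in> ball u2 e" by simp
  then have "c \<in> Bset \<alpha> b umin umax" using e(2) by (rule subsetD[rotated])
  then have cB: "c \<in> Omega umin umax" "c * \<alpha> - b > 0" unfolding Bset_mem by simp_all
  define m1 where "m1 = slope \<alpha> b u1"
  define m2 where "m2 = slope \<alpha> b u2"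
  define mc where "mc = slope \<alpha> b c"
  define r where "r = (m1 - mc) / (m2 - mc)"
  have rgt: "r > 1 \<and> m2 \<noteq> mc"
  proof (cases "u2 < u1")
    case True
    then have "c < u2" using e(1) unfolding c_def by simp
    then have "mc < m2" "m2 < m1" using slope_less[OF b cB(2) B2] slope_less[OF b B2 B1] True
      unfolding mc_def m2_def m1_def by auto
    then show ?thesis unfolding r_def by simp
  next
    case False
    then have "u1 < u2" using ne by simp
    moreover have "u2 < c" using e(1) False unfolding c_def by simp
    ultimately have "m2 < mc" "m1 < m2" using slope_less[OF b B2 cB(2)] slope_less[OF b B1 B2]
      unfolding mc_def m2_def m1_def by auto
    then have "(m1 - mc) / (m2 - mc) = (mc - m1) / (mc - m2)"
      by (metis minus_diff_eq minus_divide_divide)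
    then show ?thesis unfolding r_def using \<open>m2 < mc\<close> \<open>m1 < m2\<close> by simp
  qed
  define K where "K = c * \<alpha> - b"
  have Kp: "K > 0" using cB(2) unfolding K_def by simp
  define t0 where "t0 = ln r / K"
  have t0p: "t0 > 0" using rgt Kp unfolding t0_def by (simp add: ln_gt_zero)
  have E: "exp (K * t0) = r" using Kp rgt unfolding t0_def by simp
  have rr: "r * (m2 - slope \<alpha> b c) = m1 - slope \<alpha> b c" using rgt unfolding r_def mc_def by simp
  have ph: "phi \<alpha> b t0 p (\<lambda>_. c) = gc \<alpha> b c p t0" for p
    by (rule phi_const) (use cB(2) t0p in auto)
  have img: "(\<lambda>p. phi \<alpha> b t0 p (\<lambda>_. c)) ` ray \<alpha> b u1 = ray \<alpha> b u2"
  proof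
    show "(\<lambda>p. phi \<alpha> b t0 p (\<lambda>_. c)) ` ray \<alpha> b u1 \<subseteq> ray \<alpha> b u2"
    proof
      fix q assume "q \<in> (\<lambda>p. phi \<alpha> b t0 p (\<lambda>_. c)) ` ray \<alpha> b u1"
      then obtain p where p0: "p \<in> ray \<alpha> b u1" "q = phi \<alpha> b t0 p (\<lambda>_. c)" by (rule imageE) simp
      then have p: "p \<in> ray \<alpha> b u1" "q = gc \<alpha> b c p t0" using ph[of p] by simp_all
      have pp: "fst p > 0" "snd p = m1 * fst p" using p(1) unfolding ray_mem m1_def by auto
      note g = gc_ray[OF K_def E rr pp(2)]
      show "q \<in> ray \<alpha> b u2" unfolding ray_mem p(2) using g pp(1) unfolding m2_def by simp
    qed
  next
    show "ray \<alpha> b u2 \<subseteq> (\<lambda>p. phi \<alpha> b t0 p (\<lambda>_. c)) ` ray \<alpha> b u1"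
    proof
      fix q assume q: "q \<in> ray \<alpha> b u2"
      then have qq: "fst q > 0" "snd q = m2 * fst q" unfolding ray_mem m2_def by auto
      define Ec where "Ec = exp (c * \<alpha> * t0)"
      have Ecp: "Ec > 0" unfolding Ec_def by simp
      define p where "p = (fst q / Ec, m1 * (fst q / Ec))"
      have pr: "p \<in> ray \<alpha> b u1" unfolding ray_mem p_def m1_def using qq Ecp by simp
      have pm: "snd p = m1 * fst p" unfolding p_def by simp
      note g = gc_ray[OF K_def E rr pm]
      have f1: "fst (gc \<alpha> b c p t0) = fst q" using g(1) Ecp unfolding p_def Ec_def by simp
      have "gc \<alpha> b c p t0 = q"
        using f1 g(2) qq(2) unfolding p_def by (simp add: prod_eq_iff)
      then have "q = phi \<alpha> b t0 p (\<lambda>_. c)" using ph[of p] by simp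
      then show "q \<in> (\<lambda>p. phi \<alpha> b t0 p (\<lambda>_. c)) ` ray \<alpha> b u1" using pr by (rule image_eqI)
    qed
  qed
  show ?thesis using t0p cB(1) img by blast
qed


lemma part4:
  assumes a: "umin < 0" "0 < umax" "\<alpha> \<noteq> 0" "b < 0"
    and p: "p \<in> Cset \<alpha> b umin umax" and t: "t \<ge> 0" and adm: "admissible umin umax u"
  shows "phi \<alpha> b t p u \<in> Cset \<alpha> b umin umax"
proof -
  have pc: "pc u" by (rule adm_pc[OF adm])
  have rg1: "\<And>s. umin \<le> u s" and rg2: "\<And>s. u s \<le> umax" using adm_range[OF adm] by auto
  have q: "phi \<alpha> b t p u = Gam \<alpha> b u p t" by (rule phi_eq[OF pc Gam_fwd[OF pc] t])
  have fp: "fst p > 0" using p unfolding Cset_mem ray_mem by blast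
  have fq: "fst (Gam \<alpha> b u p t) > 0" unfolding Gam_def using XX_pos[OF fp] by simp
  show ?thesis
  proof (cases "b \<in> (\<lambda>u. \<alpha> * u) ` Omega umin umax")
    case False
    note C = part1[OF a False]
    have mn: "umin \<in> Omega umin umax" "umax \<in> Omega umin umax" using a unfolding Omega_def by auto
    have bmin: "umin * \<alpha> - b > 0" by (rule allB[OF a False mn(1)])
    have bmax: "umax * \<alpha> - b > 0" by (rule allB[OF a False mn(2)])
    have pb: "slope \<alpha> b umin * fst p \<le> snd p" "snd p \<le> slope \<alpha> b umax * fst p"
      using p unfolding C by auto
    have "snd (Gam \<alpha> b u p t) \<le> slope \<alpha> b umax * fst (Gam \<alpha> b u p t)"
      by (rule upper[OF pc t a(4) bmax rg2 fp pb(2)])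
    moreover have "snd (Gam \<alpha> b u p t) \<ge> slope \<alpha> b umin * fst (Gam \<alpha> b u p t)"
      by (rule lower[OF pc t a(4) bmin rg1 fp pb(1)])
    ultimately show ?thesis unfolding q C G_def using fq by simp
  next
    case True
    show ?thesis
    proof (cases "\<alpha> > 0")
      case ap: True
      note C = part2a[OF a(1,2) ap a(4) True]
      have "umax * \<alpha> > 0" using a ap by simp
      then have bmax: "umax * \<alpha> - b > 0" using a by linarith
      have pb: "snd p \<le> slope \<alpha> b umax * fst p" using p unfolding C by auto
      have "snd (Gam \<alpha> b u p t) \<le> slope \<alpha> b umax * fst (Gam \<alpha> b u p t)"
        by (rule upper[OF pc t a(4) bmax rg2 fp pb])
      then show ?thesis unfolding q C G_def using fq by simp
    next
      case False
      then have an: "\<alpha> < 0" using a(3) by simp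
      note C = part2b[OF a(1,2) an a(4) True]
      have "umin * \<alpha> > 0" using a an by (simp add: mult_neg_neg)
      then have bmin: "umin * \<alpha> - b > 0" using a by linarith
      have pb: "slope \<alpha> b umin * fst p \<le> snd p" using p unfolding C by auto
      have "snd (Gam \<alpha> b u p t) \<ge> slope \<alpha> b umin * fst (Gam \<alpha> b u p t)"
        by (rule lower[OF pc t a(4) bmin rg1 fp pb])
      then show ?thesis unfolding q C G_def using fq by simp
    qed
  qed
qed

theorem mainTheorem9:
  fixes \<alpha> b umin umax :: real
  assumes "umin < 0" and "0 < umax" and "\<alpha> \<noteq> 0" and "b < 0"
  shows
    "(b \<notin> (\<lambda>u. \<alpha> * u) ` Omega umin umax \<longrightarrow>
        Cset \<alpha> b umin umax =
          {p \<in> G. slope \<alpha> b umin * fst p \<le> snd p \<and> snd p \<le> slope \<alpha> b umax * fst p})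
   \<and> (b \<in> (\<lambda>u. \<alpha> * u) ` Omega umin umax \<longrightarrow>
        (\<alpha> > 0 \<longrightarrow> Cset \<alpha> b umin umax = {p \<in> G. snd p \<le> slope \<alpha> b umax * fst p}) \<and>
        (\<alpha> < 0 \<longrightarrow> Cset \<alpha> b umin umax = {p \<in> G. snd p \<ge> slope \<alpha> b umin * fst p}))
   \<and> (\<forall>u1 \<in> interior (Bset \<alpha> b umin umax). \<forall>u2 \<in> interior (Bset \<alpha> b umin umax).
        u1 \<noteq> u2 \<longrightarrow>
        (\<exists>t0 > 0. \<exists>u \<in> Omega umin umax.
           (\<lambda>p. phi \<alpha> b t0 p (\<lambda>_. u)) ` ray \<alpha> b u1 = ray \<alpha> b u2))
   \<and> (\<forall>p \<in> Cset \<alpha> b umin umax. \<forall>t \<ge> 0. \<forall>u. admissible umin umax u \<longrightarrow>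
        phi \<alpha> b t p u \<in> Cset \<alpha> b umin umax)"
proof (intro conjI impI ballI allI)
  assume "b \<notin> (\<lambda>u. \<alpha> * u) ` Omega umin umax"
  then show "Cset \<alpha> b umin umax =
          {p \<in> G. slope \<alpha> b umin * fst p \<le> snd p \<and> snd p \<le> slope \<alpha> b umax * fst p}"
    by (rule part1[OF assms])
next
  assume "b \<in> (\<lambda>u. \<alpha> * u) ` Omega umin umax" "\<alpha> > 0"
  then show "Cset \<alpha> b umin umax = {p \<in> G. snd p \<le> slope \<alpha> b umax * fst p}"
    using part2a[OF assms(1,2) _ assms(4)] by blast
next
  assume "b \<in> (\<lambda>u. \<alpha> * u) ` Omega umin umax" "\<alpha> < 0"
  then show "Cset \<alpha> b umin umax = {p \<in> G. snd p \<ge> slope \<alpha> b umin * fst p}"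
    using part2b[OF assms(1,2) _ assms(4)] by blast
next
  fix u1 u2 :: real assume "u1 \<in> interior (Bset \<alpha> b umin umax)" "u2 \<in> interior (Bset \<alpha> b umin umax)" "u1 \<noteq> u2"
  then show "\<exists>t0 > 0. \<exists>u \<in> Omega umin umax. (\<lambda>p. phi \<alpha> b t0 p (\<lambda>_. u)) ` ray \<alpha> b u1 = ray \<alpha> b u2"
    by (rule part3[OF assms(4)])
next
  fix p :: "real \<times> real" and t :: real and u :: "real \<Rightarrow> real"
  assume "p \<in> Cset \<alpha> b umin umax" "0 \<le> t" "admissible umin umax u"
  then show "phi \<alpha> b t p u \<in> Cset \<alpha> b umin umax" by (rule part4[OF assms])
qed

end
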